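(* Let $\lambda<\eta$, $\theta_k,z_k\in\mathbb{R}^d$ with $z_k\ne0$ and $\|z_k-\nabla f(\theta_k)\|\le(1-\eta)\|z_k\|$. Let $\alpha_k\in\mathbb{R}$, $\theta_{k+1}=\theta_k-\alpha_kz_k$, $\epsilon_k,\epsilon_{k+1}\ge0$, and $\tilde{x}(\theta_k),\tilde{x}(\theta_{k+1})$ with $\|\tilde{x}(\theta_j)-\hat{x}(\theta_j)\|\le\epsilon_j$ ($j=k,k+1$). Let $w_k=\|\nabla g(\tilde{x}(\theta_k))\|+\|\nabla g(\tilde{x}(\theta_{k+1}))\|$, $\bar{\epsilon}_k=\max\{\epsilon_k,\epsilon_{k+1}\}$ and $$s_k=\frac{1}{2L_{\nabla g}}\Big(\sqrt{w_k^2+\tfrac{L_{\nabla g}}{L_{\nabla f}}(\eta-\lambda)^2\|z_k\|^2}-w_k\Big).$$ If $\bar{\epsilon}_k\in[0,s_k)$, then $$\hat{s}_k=\sqrt{(\eta-\lambda)^2-\frac{4L_{\nabla f}(w_k\bar{\epsilon}_k+L_{\nabla g}\bar{\epsilon}_k^2)}{\|z_k\|^2}}$$ is a positive real number, the numbers $\underline{\alpha}_k=\frac{1}{L_{\nabla f}}(\eta-\lambda-\hat{s}_k)$, $\overline{\alpha}_k=\frac{1}{L_{\nabla f}}(\eta-\lambda+\hat{s}_k)$ satisfy $0\le\underline{\alpha}_k<\overline{\alpha}_k$, and if $\alpha_k\in[\underline{\alpha}_k,\overline{\alpha}_k]$ then $\psi(\alpha_k)\le0$. Moreover, viewing $\hat{s}_k,\underline{\alpha}_k,\overline{\alpha}_k$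 as functions of $\bar{\epsilon}_k\in[0,s_k)$ with $w_k$ and $z_k$ fixed, $\hat{s}_k$ is monotonically decreasing in $\bar{\epsilon}_k$, $\lim_{\bar{\epsilon}_k\to0}\underline{\alpha}_k=0$ and $\lim_{\bar{\epsilon}_k\to0}\overline{\alpha}_k=\frac{2(\eta-\lambda)}{L_{\nabla f}}>0$.
   Context: Standing: $0<\eta<1$. $g:\mathbb{R}^n\to\mathbb{R}$ continuously differentiable with $L_{\nabla g}$-Lipschitz gradient, $L_{\nabla g}>0$; $\hat{x}(\theta)=\arg\min_xh(x,\theta)$ for a lower-level function $h$ strongly convex in $x$; $f(\theta)=g(\hat{x}(\theta))$ continuously differentiable with $L_{\nabla f}$-Lipschitz gradient, $L_{\nabla f}>0$. $\psi(\alpha_k)=\overline{U}(\tilde{x}(\theta_{k+1}),\epsilon_{k+1})-\underline{U}(\tilde{x}(\theta_k),\epsilon_k)+\lambda\alpha_k\|z_k\|^2$ with $\overline{U}(x,\epsilon)=g(x)+\|\nabla g(x)\|\epsilon+\frac{L_{\nabla g}}{2}\epsilon^2$, $\underline{U}(x,\epsilon)=g(x)-\|\nabla g(x)\|\epsilon-\frac{L_{\nabla g}}{2}\epsilon^2$. *)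

theory Defs
  imports "HOL-Analysis.Analysis"
begin

definition strongly_convex :: "('b::real_normed_vector \<Rightarrow> real) \<Rightarrow> bool" where
  "strongly_convex h \<longleftrightarrow> (\<exists>mu>0. \<forall>x y. \<forall>t::real. 0 \<le> t \<and> t \<le> 1 \<longrightarrow>
      h (t *\<^sub>R x + (1 - t) *\<^sub>R y) \<le> t * h x + (1 - t) * h y - mu / 2 * t * (1 - t) * (norm (x - y))\<^sup>2)"

definition Ubar :: "('b \<Rightarrow> real) \<Rightarrow> ('b \<Rightarrow> 'b::real_normed_vector) \<Rightarrow> real \<Rightarrow> 'b \<Rightarrow> real \<Rightarrow> real" where
  "Ubar g Dg Lg x eps = g x + norm (Dg x) * eps + Lg / 2 * eps\<^sup>2"

definition Ulow :: "('b \<Rightarrow> real) \<Rightarrow> ('b \<Rightarrow> 'b::real_normed_vector) \<Rightarrow> real \<Rightarrow> 'b \<Rightarrow> real \<Rightarrow> real" where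
  "Ulow g Dg Lg x eps = g x - norm (Dg x) * eps - Lg / 2 * eps\<^sup>2"

text \<open>psi(alpha_k) with theta_{k+1} given explicitly (theta1), theta_k = theta0.\<close>
definition psi :: "('b \<Rightarrow> real) \<Rightarrow> ('b \<Rightarrow> 'b::real_normed_vector) \<Rightarrow> real \<Rightarrow> real \<Rightarrow>
    ('a \<Rightarrow> 'b) \<Rightarrow> 'a \<Rightarrow> real \<Rightarrow> 'a \<Rightarrow> real \<Rightarrow> 'a::real_normed_vector \<Rightarrow> real \<Rightarrow> real" where
  "psi g Dg Lg lam xt theta1 eps1 theta0 eps0 z alpha =
     Ubar g Dg Lg (xt theta1) eps1 - Ulow g Dg Lg (xt theta0) eps0 + lam * alpha * (norm z)\<^sup>2"

definition shat :: "real \<Rightarrow> real \<Rightarrow> real \<Rightarrow> real \<Rightarrow> real \<Rightarrow> 'a::real_normed_vector \<Rightarrow> real \<Rightarrow> real" where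
  "shat eta lam Lf Lg w z e =
     sqrt ((eta - lam)\<^sup>2 - 4 * Lf * (w * e + Lg * e\<^sup>2) / (norm z)\<^sup>2)"

definition alpha_low :: "real \<Rightarrow> real \<Rightarrow> real \<Rightarrow> real \<Rightarrow> real \<Rightarrow> 'a::real_normed_vector \<Rightarrow> real \<Rightarrow> real" where
  "alpha_low eta lam Lf Lg w z e = (eta - lam - shat eta lam Lf Lg w z e) / Lf"

definition alpha_up :: "real \<Rightarrow> real \<Rightarrow> real \<Rightarrow> real \<Rightarrow> real \<Rightarrow> 'a::real_normed_vector \<Rightarrow> real \<Rightarrow> real" where
  "alpha_up eta lam Lf Lg w z e = (eta - lam + shat eta lam Lf Lg w z e) / Lf"

end

theory Submission
  imports Defs
begin

lemma line_deriv:
  fixes g :: "'a::real_inner \<Rightarrow> real"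
  assumes "\<And>x. GDERIV g x :> Dg x"
  shows "((\<lambda>t. g (x + t *\<^sub>R v)) has_real_derivative (v \<bullet> Dg (x + t *\<^sub>R v))) (at t)"
proof -
  have d1: "((\<lambda>t. x + t *\<^sub>R v) has_derivative (\<lambda>t. t *\<^sub>R v)) (at t)"
    by (auto intro!: derivative_eq_intros)
  have d2: "(g has_derivative (\<lambda>h. h \<bullet> Dg (x + t *\<^sub>R v))) (at (x + t *\<^sub>R v))"
    using assms unfolding gderiv_def by blast
  have "((\<lambda>t. g (x + t *\<^sub>R v)) has_derivative (\<lambda>h. (h *\<^sub>R v) \<bullet> Dg (x + t *\<^sub>R v))) (at t)"
    using has_derivative_compose[OF d1 d2] by (simp add: o_def)
  moreover have "(\<lambda>h. (h *\<^sub>R v) \<bullet> Dg (x + t *\<^sub>R v)) = (*) (v \<bullet> Dg (x + t *\<^sub>R v))"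
    by (auto simp: fun_eq_iff)
  ultimately show ?thesis unfolding has_field_derivative_def by simp
qed

lemma descent:
  fixes g :: "'a::real_inner \<Rightarrow> real"
  assumes gd: "\<And>x. GDERIV g x :> Dg x" and lip: "L-lipschitz_on UNIV Dg"
  shows "\<bar>g y - g x - Dg x \<bullet> (y - x)\<bar> \<le> L/2 * (norm (y-x))\<^sup>2"
proof -
  define v where "v = y - x"
  have key: "\<bar>(Dg (x + t *\<^sub>R v) - Dg x) \<bullet> v\<bar> \<le> L * t * (norm v)\<^sup>2" if "0 \<le> t" for t
  proof -
    have "\<bar>(Dg (x + t *\<^sub>R v) - Dg x) \<bullet> v\<bar> \<le> norm (Dg (x + t *\<^sub>R v) - Dg x) * norm v"
      by (rule Cauchy_Schwarz_ineq2)
    also have "norm (Dg (x + t *\<^sub>R v) - Dg x) \<le> L * norm (t *\<^sub>R v)"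
      using lipschitz_onD[OF lip, of "x + t *\<^sub>R v" x] by (simp add: dist_norm)
    hence "norm (Dg (x + t *\<^sub>R v) - Dg x) * norm v \<le> L * norm (t *\<^sub>R v) * norm v"
      by (simp add: mult_right_mono)
    also have "\<dots> = L * t * (norm v)\<^sup>2" using that by (simp add: power2_eq_square)
    finally show ?thesis .
  qed
  have key2: "v \<bullet> Dg (x + t *\<^sub>R v) - v \<bullet> Dg x \<le> L * t * (norm v)\<^sup>2"
     "- (L * t * (norm v)\<^sup>2) \<le> v \<bullet> Dg (x + t *\<^sub>R v) - v \<bullet> Dg x" if "0 \<le> t" for t
    using key[OF that] by (auto simp: inner_commute abs_le_iff inner_diff_right)
  define p where "p = (\<lambda>t. g (x + t *\<^sub>R v) - t * (v \<bullet> Dg x) - L/2 * t\<^sup>2 * (norm v)\<^sup>2)"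
  define q where "q = (\<lambda>t. g (x + t *\<^sub>R v) - t * (v \<bullet> Dg x) + L/2 * t\<^sup>2 * (norm v)\<^sup>2)"
  have pd: "(p has_real_derivative (v \<bullet> Dg (x + t *\<^sub>R v) - v \<bullet> Dg x - L * t * (norm v)\<^sup>2)) (at t)" for t
    unfolding p_def
    by (rule line_deriv[OF gd] derivative_eq_intros refl | simp)+
  have qd: "(q has_real_derivative (v \<bullet> Dg (x + t *\<^sub>R v) - v \<bullet> Dg x + L * t * (norm v)\<^sup>2)) (at t)" for t
    unfolding q_def
    by (rule line_deriv[OF gd] derivative_eq_intros refl | simp)+
  have "p 1 \<le> p 0"
    by (rule deriv_nonpos_imp_antimono[OF pd]) (use key2 in auto)
  moreover have "q 0 \<le> q 1"
    proof (rule DERIV_nonneg_imp_nondecreasing[of 0 1 q])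
    fix t :: real assume "0 \<le> t" "t \<le> 1"
    thus "\<exists>y. (q has_real_derivative y) (at t) \<and> 0 \<le> y"
      using qd[of t] key2(2)[of t] by (intro exI[of _ "v \<bullet> Dg (x + t *\<^sub>R v) - v \<bullet> Dg x + L * t * (norm v)\<^sup>2"]) auto
  qed simp
  ultimately have "g y - g x - Dg x \<bullet> (y - x) \<le> L/2 * (norm (y-x))\<^sup>2"
      "-(L/2 * (norm (y-x))\<^sup>2) \<le> g y - g x - Dg x \<bullet> (y - x)"
    unfolding p_def q_def v_def by (simp_all add: inner_commute)
  thus ?thesis by (intro abs_leI) linarith+
qed

theorem lemma3p8:
  fixes g :: "'b::euclidean_space \<Rightarrow> real" and Dg :: "'b \<Rightarrow> 'b"
    and h :: "'b \<Rightarrow> 'a::euclidean_space \<Rightarrow> real" and xhat :: "'a \<Rightarrow> 'b"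
    and f :: "'a \<Rightarrow> real" and Df :: "'a \<Rightarrow> 'a"
    and xt :: "'a \<Rightarrow> 'b"
    and eta lam Lg Lf alpha eps0 eps1 :: real
    and theta0 theta1 z :: 'a
  assumes eta: "0 < eta" "eta < 1"
    and g_grad: "\<And>x. GDERIV g x :> Dg x"
    and g_cont: "continuous_on UNIV Dg"
    and Lg_pos: "Lg > 0" and Dg_lip: "Lg-lipschitz_on UNIV Dg"
    and h_sc: "\<And>theta. strongly_convex (\<lambda>x. h x theta)"
    and xhat_min: "\<And>theta x. h (xhat theta) theta \<le> h x theta"
    and f_def: "\<And>theta. f theta = g (xhat theta)"
    and f_grad: "\<And>theta. GDERIV f theta :> Df theta"
    and f_cont: "continuous_on UNIV Df"
    and Lf_pos: "Lf > 0" and Df_lip: "Lf-lipschitz_on UNIV Df"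
    and lam: "lam < eta"
    and z_nz: "z \<noteq> 0"
    and z_approx: "norm (z - Df theta0) \<le> (1 - eta) * norm z"
    and theta1: "theta1 = theta0 - alpha *\<^sub>R z"
    and eps_nonneg: "eps0 \<ge> 0" "eps1 \<ge> 0"
    and xt0: "norm (xt theta0 - xhat theta0) \<le> eps0"
    and xt1: "norm (xt theta1 - xhat theta1) \<le> eps1"
    and ebar_lt: "max eps0 eps1 < (sqrt ((norm (Dg (xt theta0)) + norm (Dg (xt theta1)))\<^sup>2
                    + Lg / Lf * (eta - lam)\<^sup>2 * (norm z)\<^sup>2)
                    - (norm (Dg (xt theta0)) + norm (Dg (xt theta1)))) / (2 * Lg)"
  shows "let w = norm (Dg (xt theta0)) + norm (Dg (xt theta1));
             ebar = max eps0 eps1;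
             s = (sqrt (w\<^sup>2 + Lg / Lf * (eta - lam)\<^sup>2 * (norm z)\<^sup>2) - w) / (2 * Lg)
         in shat eta lam Lf Lg w z ebar > 0
          \<and> 0 \<le> alpha_low eta lam Lf Lg w z ebar
          \<and> alpha_low eta lam Lf Lg w z ebar < alpha_up eta lam Lf Lg w z ebar
          \<and> (alpha \<in> {alpha_low eta lam Lf Lg w z ebar .. alpha_up eta lam Lf Lg w z ebar}
               \<longrightarrow> psi g Dg Lg lam xt theta1 eps1 theta0 eps0 z alpha \<le> 0)
          \<and> (\<forall>e1 e2. 0 \<le> e1 \<and> e1 \<le> e2 \<and> e2 < s \<longrightarrow>
                shat eta lam Lf Lg w z e2 \<le> shat eta lam Lf Lg w z e1)
          \<and> ((\<lambda>e. alpha_low eta lam Lf Lg w z e) \<longlongrightarrow> 0) (at_right 0)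
          \<and> ((\<lambda>e. alpha_up eta lam Lf Lg w z e) \<longlongrightarrow> 2 * (eta - lam) / Lf) (at_right 0)
          \<and> 2 * (eta - lam) / Lf > 0"
proof -
  define a where "a = norm (Dg (xt theta0))"
  define b where "b = norm (Dg (xt theta1))"
  define w where "w = a + b"
  define e where "e = max eps0 eps1"
  define s where "s = (sqrt (w\<^sup>2 + Lg / Lf * (eta - lam)\<^sup>2 * (norm z)\<^sup>2) - w) / (2 * Lg)"
  define c where "c = eta - lam"
  define N where "N = (norm z)\<^sup>2"
  have c_pos: "c > 0" using lam by (simp add: c_def)
  have N_pos: "N > 0" using z_nz by (simp add: N_def)
  have a0: "a \<ge> 0" and b0: "b \<ge> 0" by (simp_all add: a_def b_def)
  have w0: "w \<ge> 0" using a0 b0 by (simp add: w_def)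
  have e0: "e \<ge> 0" using eps_nonneg by (simp add: e_def)
  have e_lt: "e < s" using ebar_lt by (simp add: e_def s_def w_def a_def b_def)
  have Qlt: "4 * Lf * (w * x + Lg * x\<^sup>2) < c\<^sup>2 * N" if "0 \<le> x" "x < s" for x
  proof -
    define X where "X = w\<^sup>2 + Lg / Lf * c\<^sup>2 * N"
    have X0: "X \<ge> 0" using Lf_pos Lg_pos N_pos by (simp add: X_def)
    have "2 * Lg * x + w < sqrt X"
      using that Lg_pos by (simp add: s_def X_def c_def N_def field_simps)
    moreover have "0 \<le> 2 * Lg * x + w" using that Lg_pos w0 by simp
    ultimately have "(2 * Lg * x + w)\<^sup>2 < (sqrt X)\<^sup>2"
      by (intro power_strict_mono) auto
    hence "(2 * Lg * x + w)\<^sup>2 < X" using X0 by simp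
    hence "4 * Lg * (Lg * x\<^sup>2 + w * x) < Lg / Lf * c\<^sup>2 * N"
      by (simp add: X_def power2_eq_square algebra_simps)
    hence "Lg * (4 * (Lg * x\<^sup>2 + w * x)) < Lg * (c\<^sup>2 * N / Lf)"
      by (simp add: algebra_simps)
    hence "4 * (Lg * x\<^sup>2 + w * x) < c\<^sup>2 * N / Lf" using Lg_pos
      by (simp only: mult_less_cancel_left_pos)
    thus ?thesis using Lf_pos by (simp add: field_simps)
  qed
  have shat_eq: "shat eta lam Lf Lg w z x = sqrt (c\<^sup>2 - 4 * Lf * (w * x + Lg * x\<^sup>2) / N)" for x
    by (simp add: shat_def c_def N_def)
  have inner_pos: "c\<^sup>2 - 4 * Lf * (w * x + Lg * x\<^sup>2) / N > 0" if "0 \<le> x" "x < s" for x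
    using Qlt[OF that] N_pos by (simp add: field_simps)
  have inner_le: "c\<^sup>2 - 4 * Lf * (w * x + Lg * x\<^sup>2) / N \<le> c\<^sup>2" if "0 \<le> x" for x
    using that N_pos Lf_pos Lg_pos w0 by (simp add: field_simps)
  define S where "S = shat eta lam Lf Lg w z e"
  have S_pos: "S > 0" using inner_pos[OF e0 e_lt] by (simp add: S_def shat_eq)
  have S_le: "S \<le> c"
  proof -
    have "S \<le> sqrt (c\<^sup>2)" unfolding S_def shat_eq by (rule real_sqrt_le_mono[OF inner_le[OF e0]])
    thus ?thesis using c_pos by simp
  qed
  have S_sq: "S\<^sup>2 = c\<^sup>2 - 4 * Lf * (w * e + Lg * e\<^sup>2) / N"
    using inner_pos[OF e0 e_lt] by (simp add: S_def shat_eq)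
  have al: "alpha_low eta lam Lf Lg w z e = (c - S) / Lf" by (simp add: alpha_low_def S_def c_def)
  have au: "alpha_up eta lam Lf Lg w z e = (c + S) / Lf" by (simp add: alpha_up_def S_def c_def)
  have C1: "0 \<le> alpha_low eta lam Lf Lg w z e" using al S_le Lf_pos by simp
  have C2: "alpha_low eta lam Lf Lg w z e < alpha_up eta lam Lf Lg w z e"
    using al au S_pos Lf_pos by (simp add: divide_strict_right_mono)
  have C3: "psi g Dg Lg lam xt theta1 eps1 theta0 eps0 z alpha \<le> 0"
    if "alpha \<in> {alpha_low eta lam Lf Lg w z e .. alpha_up eta lam Lf Lg w z e}"
  proof -
    have alo: "c - S \<le> Lf * alpha" and ahi: "Lf * alpha \<le> c + S"
      using that al au Lf_pos by (auto simp: field_simps)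
    have al0: "alpha \<ge> 0" using alo S_le Lf_pos
      by (metis diff_ge_0_iff_ge dual_order.trans zero_le_mult_iff linorder_not_le)
    have "(Lf * alpha - c)\<^sup>2 \<le> S\<^sup>2"
      using alo ahi by (intro power2_le_iff_abs_le[THEN iffD2]) (use S_pos in auto)
    hence "Lf * (Lf * alpha\<^sup>2 - 2 * c * alpha + 4 * (w * e + Lg * e\<^sup>2) / N) \<le> 0"
      unfolding S_sq by (simp add: power2_eq_square algebra_simps)
    hence q1: "Lf * alpha\<^sup>2 - 2 * c * alpha + 4 * (w * e + Lg * e\<^sup>2) / N \<le> 0"
      using Lf_pos by (simp add: mult_le_0_iff)
    have "N * (Lf * alpha\<^sup>2 - 2 * c * alpha + 4 * (w * e + Lg * e\<^sup>2) / N) \<le> 0"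
      using q1 N_pos by (simp add: mult_le_0_iff)
    have quad: "Lf * alpha\<^sup>2 * N - 2 * c * alpha * N + 4 * (w * e + Lg * e\<^sup>2) \<le> 0"
    proof -
      have "N * (Lf * alpha\<^sup>2 - 2 * c * alpha + 4 * (w * e + Lg * e\<^sup>2) / N)
          = Lf * alpha\<^sup>2 * N - 2 * c * alpha * N + 4 * (w * e + Lg * e\<^sup>2)"
        using N_pos by (simp add: field_simps)
      thus ?thesis using \<open>N * (Lf * alpha\<^sup>2 - 2 * c * alpha + 4 * (w * e + Lg * e\<^sup>2) / N) \<le> 0\<close> by linarith
    qed
    have d1: "\<bar>g (xhat theta1) - g (xt theta1) - Dg (xt theta1) \<bullet> (xhat theta1 - xt theta1)\<bar>
        \<le> Lg/2 * (norm (xhat theta1 - xt theta1))\<^sup>2"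
      by (rule descent[OF g_grad Dg_lip])
    have d0: "\<bar>g (xhat theta0) - g (xt theta0) - Dg (xt theta0) \<bullet> (xhat theta0 - xt theta0)\<bar>
        \<le> Lg/2 * (norm (xhat theta0 - xt theta0))\<^sup>2"
      by (rule descent[OF g_grad Dg_lip])
    have i1: "\<bar>Dg (xt theta1) \<bullet> (xhat theta1 - xt theta1)\<bar> \<le> b * eps1"
    proof -
      have "\<bar>Dg (xt theta1) \<bullet> (xhat theta1 - xt theta1)\<bar> \<le> b * norm (xhat theta1 - xt theta1)"
        unfolding b_def by (rule Cauchy_Schwarz_ineq2)
      also have "\<dots> \<le> b * eps1" using xt1 b0 by (intro mult_left_mono) (auto simp: norm_minus_commute)
      finally show ?thesis .
    qed
    have i0: "\<bar>Dg (xt theta0) \<bullet> (xhat theta0 - xt theta0)\<bar> \<le> a * eps0"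
    proof -
      have "\<bar>Dg (xt theta0) \<bullet> (xhat theta0 - xt theta0)\<bar> \<le> a * norm (xhat theta0 - xt theta0)"
        unfolding a_def by (rule Cauchy_Schwarz_ineq2)
      also have "\<dots> \<le> a * eps0" using xt0 a0 by (intro mult_left_mono) (auto simp: norm_minus_commute)
      finally show ?thesis .
    qed
    have n1: "Lg/2 * (norm (xhat theta1 - xt theta1))\<^sup>2 \<le> Lg/2 * eps1\<^sup>2"
      using xt1 Lg_pos by (intro mult_left_mono power_mono) (auto simp: norm_minus_commute)
    have n0: "Lg/2 * (norm (xhat theta0 - xt theta0))\<^sup>2 \<le> Lg/2 * eps0\<^sup>2"
      using xt0 Lg_pos by (intro mult_left_mono power_mono) (auto simp: norm_minus_commute)
    have g1: "g (xt theta1) \<le> f theta1 + b * eps1 + Lg/2 * eps1\<^sup>2"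
      using d1 i1 n1 f_def[of theta1] unfolding abs_le_iff by linarith
    have g0: "g (xt theta0) \<ge> f theta0 - a * eps0 - Lg/2 * eps0\<^sup>2"
      using d0 i0 n0 f_def[of theta0] unfolding abs_le_iff by linarith
    have df: "\<bar>f theta1 - f theta0 - Df theta0 \<bullet> (theta1 - theta0)\<bar> \<le> Lf/2 * (norm (theta1 - theta0))\<^sup>2"
      by (rule descent[OF f_grad Df_lip])
    have dfz: "Df theta0 \<bullet> z \<ge> eta * N"
    proof -
      have "(z - Df theta0) \<bullet> z \<le> norm (z - Df theta0) * norm z" by (rule Cauchy_Schwarz_ineq2[THEN order_trans[OF abs_ge_self]])
      also have "\<dots> \<le> (1 - eta) * norm z * norm z" using z_approx by (intro mult_right_mono) auto
      finally have "(z - Df theta0) \<bullet> z \<le> (1 - eta) * N" by (simp add: N_def power2_eq_square)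
      moreover have "(z - Df theta0) \<bullet> z = N - Df theta0 \<bullet> z"
        by (simp add: N_def inner_diff_left power2_norm_eq_inner)
      ultimately show ?thesis by (simp add: algebra_simps)
    qed
    have f1: "f theta1 \<le> f theta0 - alpha * (Df theta0 \<bullet> z) + Lf/2 * alpha\<^sup>2 * N"
    proof -
      have "theta1 - theta0 = - (alpha *\<^sub>R z)" using theta1 by simp
      hence e1: "Df theta0 \<bullet> (theta1 - theta0) = - alpha * (Df theta0 \<bullet> z)"
        and e2: "(norm (theta1 - theta0))\<^sup>2 = alpha\<^sup>2 * N"
        by (simp_all add: N_def power_mult_distrib)
      show ?thesis using df unfolding e1 e2 abs_le_iff by (simp add: algebra_simps)
    qed
    have f1': "f theta1 \<le> f theta0 - alpha * eta * N + Lf/2 * alpha\<^sup>2 * N"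
    proof -
      have "alpha * eta * N \<le> alpha * (Df theta0 \<bullet> z)" using dfz al0
        by (metis mult.assoc mult_left_mono)
      thus ?thesis using f1 by linarith
    qed
    have eb: "b * eps1 \<le> b * e" "a * eps0 \<le> a * e" using b0 a0
      by (auto intro!: mult_left_mono simp: e_def)
    have ee: "eps1\<^sup>2 \<le> e\<^sup>2" "eps0\<^sup>2 \<le> e\<^sup>2" using eps_nonneg
      by (auto intro!: power_mono simp: e_def)
    have "psi g Dg Lg lam xt theta1 eps1 theta0 eps0 z alpha
        = g (xt theta1) + b * eps1 + Lg / 2 * eps1\<^sup>2 - (g (xt theta0) - a * eps0 - Lg / 2 * eps0\<^sup>2)
          + lam * alpha * N"
      by (simp add: psi_def Ubar_def Ulow_def a_def b_def N_def)
    also have "\<dots> \<le> (Lf * alpha\<^sup>2 * N - 2 * c * alpha * N + 4 * (w * e + Lg * e\<^sup>2)) / 2"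
    proof -
      have "Lg * eps1\<^sup>2 \<le> Lg * e\<^sup>2" "Lg * eps0\<^sup>2 \<le> Lg * e\<^sup>2"
        using ee Lg_pos by simp_all
      thus ?thesis using g1 g0 f1' eb unfolding c_def w_def by (simp add: algebra_simps)
    qed
    also have "\<dots> \<le> 0" using quad by simp
    finally show ?thesis .
  qed
  have C4: "\<forall>e1 e2. 0 \<le> e1 \<and> e1 \<le> e2 \<and> e2 < s \<longrightarrow>
                shat eta lam Lf Lg w z e2 \<le> shat eta lam Lf Lg w z e1"
  proof (intro allI impI)
    fix e1 e2 :: real assume h: "0 \<le> e1 \<and> e1 \<le> e2 \<and> e2 < s"
    have "w * e1 + Lg * e1\<^sup>2 \<le> w * e2 + Lg * e2\<^sup>2"
      using h w0 Lg_pos by (intro add_mono mult_left_mono power_mono) auto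
    hence "4 * Lf * (w * e1 + Lg * e1\<^sup>2) / N \<le> 4 * Lf * (w * e2 + Lg * e2\<^sup>2) / N"
      using Lf_pos N_pos by (intro divide_right_mono mult_left_mono) auto
    thus "shat eta lam Lf Lg w z e2 \<le> shat eta lam Lf Lg w z e1"
      unfolding shat_eq by (intro real_sqrt_le_mono) linarith
  qed
  have lim_sh: "((\<lambda>x. shat eta lam Lf Lg w z x) \<longlongrightarrow> c) (at_right 0)"
  proof -
    have "((\<lambda>x. sqrt (c\<^sup>2 - 4 * Lf * (w * x + Lg * x\<^sup>2) / N)) \<longlongrightarrow>
           sqrt (c\<^sup>2 - 4 * Lf * (w * 0 + Lg * 0\<^sup>2) / N)) (at_right 0)"
      using N_pos by (intro tendsto_intros) auto
    thus ?thesis using c_pos unfolding shat_eq by simp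
  qed
  have C5: "((\<lambda>x. alpha_low eta lam Lf Lg w z x) \<longlongrightarrow> 0) (at_right 0)"
  proof -
    have "((\<lambda>x. (c - shat eta lam Lf Lg w z x) / Lf) \<longlongrightarrow> (c - c) / Lf) (at_right 0)"
      by (intro tendsto_intros lim_sh) (use Lf_pos in auto)
    thus ?thesis by (simp add: alpha_low_def c_def)
  qed
  have C6: "((\<lambda>x. alpha_up eta lam Lf Lg w z x) \<longlongrightarrow> 2 * (eta - lam) / Lf) (at_right 0)"
  proof -
    have "((\<lambda>x. (c + shat eta lam Lf Lg w z x) / Lf) \<longlongrightarrow> (c + c) / Lf) (at_right 0)"
      by (intro tendsto_intros lim_sh) (use Lf_pos in auto)
    thus ?thesis by (simp add: alpha_up_def c_def)
  qed
  have C7: "2 * (eta - lam) / Lf > 0" using c_pos Lf_pos by (simp add: c_def)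
  show ?thesis
    unfolding Let_def a_def[symmetric] b_def[symmetric] w_def[symmetric] e_def[symmetric] s_def[symmetric]
    using S_pos C1 C2 C3 C4 C5 C6 C7 unfolding S_def by blast
qed

end
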